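(* Let $P$ be a path linkage with $k\ge2$ edges, all of positive length. Let $p\in M(P)$ and let $\alpha:[0,1]\to[P]$ be continuous with $\alpha(0)=\theta(p)$. Then there exists a continuous $\tilde\alpha:[0,1]\to M(P)$ with $\tilde\alpha(0)=p$ and $\theta\circ\tilde\alpha=\alpha$.
   Context: A path linkage is a linkage $P=(G,l)$ where $G$ is a path graph with vertices $1,\dots,k+1$ and edges $\{i,i+1\}$; its terminal vertices are $s=1$, $t=k+1$. $C(P)=\{p:V\to\mathbb R^2:|p(u)-p(v)|=l(\{u,v\})\text{ for every edge}\}$, and $M(P)$ is the quotient of $C(P)$ by the group of orientation preserving isometries of $\mathbb R^2$, with the quotient topology. $\theta:M(P)\to\mathbb R$, $\theta(p)=|p(s)-p(t)|$, and $[P]=\theta(M(P))$. *)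

theory Defs
  imports "HOL-Analysis.Analysis"
begin

text \<open>The plane R^2 is modelled by the complex numbers. A path linkage with k edges
  has vertices 1..k+1 and edge lengths l i for the edge {i, i+1}, i = 1..k.\<close>

definition quot_topology :: "'a topology \<Rightarrow> ('a \<Rightarrow> 'b) \<Rightarrow> 'b topology" where
  "quot_topology X f =
     topology (\<lambda>U. U \<subseteq> f ` topspace X \<and> openin X {x \<in> topspace X. f x \<in> U})"

lemma istopology_quot:
  "istopology (\<lambda>U. U \<subseteq> f ` topspace X \<and> openin X {x \<in> topspace X. f x \<in> U})"
  unfolding istopology_def
proof (rule conjI; intro allI impI)
  fix S T assume a: "S \<subseteq> f ` topspace X \<and> openin X {x \<in> topspace X. f x \<in> S}"
    "T \<subseteq> f ` topspace X \<and> openin X {x \<in> topspace X. f x \<in> T}"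
  have "{x \<in> topspace X. f x \<in> S \<inter> T} = {x \<in> topspace X. f x \<in> S} \<inter> {x \<in> topspace X. f x \<in> T}"
    by auto
  then show "S \<inter> T \<subseteq> f ` topspace X \<and> openin X {x \<in> topspace X. f x \<in> S \<inter> T}"
    using a by auto
next
  fix K assume a: "\<forall>S\<in>K. S \<subseteq> f ` topspace X \<and> openin X {x \<in> topspace X. f x \<in> S}"
  have "{x \<in> topspace X. f x \<in> \<Union>K} = (\<Union>S\<in>K. {x \<in> topspace X. f x \<in> S})" by auto
  moreover have "openin X (\<Union>S\<in>K. {x \<in> topspace X. f x \<in> S})" using a by auto
  ultimately show "\<Union>K \<subseteq> f ` topspace X \<and> openin X {x \<in> topspace X. f x \<in> \<Union>K}"
    using a by auto
qed

lemma openin_quot_topology: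
  "openin (quot_topology X f) U \<longleftrightarrow> U \<subseteq> f ` topspace X \<and> openin X {x \<in> topspace X. f x \<in> U}"
  unfolding quot_topology_def topology_inverse'[OF istopology_quot] by simp

definition orient_isometries :: "(complex \<Rightarrow> complex) set" where
  "orient_isometries = {g. \<exists>u b. cmod u = 1 \<and> g = (\<lambda>z. u * z + b)}"

definition path_conf :: "nat \<Rightarrow> (nat \<Rightarrow> real) \<Rightarrow> (nat \<Rightarrow> complex) set" where
  "path_conf k l = {p \<in> PiE {1..Suc k} (\<lambda>_. UNIV).
      \<forall>i\<in>{1..k}. cmod (p (Suc i) - p i) = l i}"

definition path_conf_top :: "nat \<Rightarrow> (nat \<Rightarrow> real) \<Rightarrow> (nat \<Rightarrow> complex) topology" where
  "path_conf_top k l = subtopology (product_topology (\<lambda>_. euclidean) {1..Suc k}) (path_conf k l)"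

definition conf_orbit :: "nat \<Rightarrow> (nat \<Rightarrow> complex) \<Rightarrow> (nat \<Rightarrow> complex) set" where
  "conf_orbit k p = {restrict (g \<circ> p) {1..Suc k} | g. g \<in> orient_isometries}"

definition moduli_top :: "nat \<Rightarrow> (nat \<Rightarrow> real) \<Rightarrow> (nat \<Rightarrow> complex) set topology" where
  "moduli_top k l = quot_topology (path_conf_top k l) (conf_orbit k)"

definition moduli :: "nat \<Rightarrow> (nat \<Rightarrow> real) \<Rightarrow> (nat \<Rightarrow> complex) set set" where
  "moduli k l = conf_orbit k ` path_conf k l"

text \<open>theta: distance between terminal vertices s = 1 and t = k+1 (well defined on orbits).\<close>
definition theta :: "nat \<Rightarrow> (nat \<Rightarrow> complex) set \<Rightarrow> real" where
  "theta k c = (let q = (SOME q. q \<in> c) in cmod (q 1 - q (Suc k)))"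

lemma topspace_quot_topology: "topspace (quot_topology X f) = f ` topspace X"
proof (rule antisym)
  have "{x \<in> topspace X. f x \<in> f ` topspace X} = topspace X" by blast
  then have "openin (quot_topology X f) (f ` topspace X)"
    unfolding openin_quot_topology by simp
  then show "f ` topspace X \<subseteq> topspace (quot_topology X f)" by (rule openin_subset)
  have "openin (quot_topology X f) (topspace (quot_topology X f))" by (rule openin_topspace)
  then show "topspace (quot_topology X f) \<subseteq> f ` topspace X"
    unfolding openin_quot_topology by (rule conjunct1)
qed

lemma topspace_moduli_top: "topspace (moduli_top k l) = moduli k l"
proof -
  have "topspace (path_conf_top k l) = path_conf k l"
    unfolding path_conf_top_def path_conf_def by auto
  then show ?thesis
    by (simp add: moduli_top_def moduli_def topspace_quot_topology)
qed

end

theory Submission imports Defs begin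

definition Lsum :: "(nat \<Rightarrow> real) \<Rightarrow> nat set \<Rightarrow> real" where
  "Lsum l I = (\<Sum>i\<in>I. l i)"
definition mlow :: "(nat \<Rightarrow> real) \<Rightarrow> nat set \<Rightarrow> real" where
  "mlow l I = max 0 (2 * Max (l ` I) - Lsum l I)"

lemma sum_bounds:
  assumes "finite I" "I \<noteq> {}" "\<forall>i\<in>I. cmod (w i) = l i"
  shows "mlow l I \<le> cmod (\<Sum>i\<in>I. w i) \<and> cmod (\<Sum>i\<in>I. w i) \<le> Lsum l I"
proof
  have "cmod (\<Sum>i\<in>I. w i) \<le> (\<Sum>i\<in>I. cmod (w i))" by (rule norm_sum)
  also have "\<dots> = Lsum l I" using assms(3) by (simp add: Lsum_def)
  finally show "cmod (\<Sum>i\<in>I. w i) \<le> Lsum l I" .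
  obtain j where j: "j \<in> I" "l j = Max (l ` I)"
  proof -
    have "Max (l ` I) \<in> l ` I" using Max_in[of "l ` I"] assms(1,2) by auto
    then show ?thesis using that by (metis imageE)
  qed
  have s: "(\<Sum>i\<in>I. w i) = w j + (\<Sum>i\<in>I-{j}. w i)" using sum.remove[OF assms(1) j(1)] .
  have s2: "Lsum l I = l j + (\<Sum>i\<in>I-{j}. l i)" using sum.remove[OF assms(1) j(1), of l] by (simp add: Lsum_def)
  have "cmod (\<Sum>i\<in>I-{j}. w i) \<le> (\<Sum>i\<in>I-{j}. cmod (w i))" by (rule norm_sum)
  also have "\<dots> = (\<Sum>i\<in>I-{j}. l i)" using assms(3) by simp
  finally have a: "cmod (\<Sum>i\<in>I-{j}. w i) \<le> (\<Sum>i\<in>I-{j}. l i)" .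
  have "cmod (w j) - cmod (\<Sum>i\<in>I-{j}. w i) \<le> cmod (\<Sum>i\<in>I. w i)"
    unfolding s by (metis norm_diff_ineq)
  then show "mlow l I \<le> cmod (\<Sum>i\<in>I. w i)"
    using a s2 j assms(3) unfolding mlow_def by auto
qed

lemma cis_recover:
  assumes "cmod z = 1"
  shows "z = cis ((if Im z \<ge> 0 then 1 else -1) * arccos (Re z))"
proof -
  have h: "(Re z)^2 + (Im z)^2 = 1" using assms by (simp add: cmod_def)
  have r: "-1 \<le> Re z" "Re z \<le> 1" using abs_Re_le_cmod[of z] assms by auto
  have sq: "sqrt (1 - (Re z)^2) = \<bar>Im z\<bar>" using h by (metis add_diff_cancel_left' real_sqrt_abs)
  show ?thesis
  proof (rule complex_eqI)
    show "Re z = Re (cis ((if Im z \<ge> 0 then 1 else -1) * arccos (Re z)))"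
      using r by simp
    show "Im z = Im (cis ((if Im z \<ge> 0 then 1 else -1) * arccos (Re z)))"
      using r sq by (simp add: sin_arccos)
  qed
qed

lemma norm_cis_sq:
  "(cmod (of_real b + of_real l * cis x))^2 = b^2 + l^2 + 2*b*l*cos x"
proof -
  have "(cmod (of_real b + of_real l * cis x))^2 = (b + l * cos x)^2 + (l * sin x)^2"
    by (simp add: cmod_power2)
  also have "\<dots> = b^2 + l^2 + 2*b*l*cos x"
  proof -
    have e: "sin x * sin x = 1 - cos x * cos x" using sin_cos_squared_add[of x]
      by (simp add: power2_eq_square)
    show ?thesis by (simp add: power2_eq_square algebra_simps e)
  qed
  finally show ?thesis .
qed

lemma norm_add_sq:
  "(cmod (a + b))^2 = (cmod a)^2 + (cmod b)^2 + 2 * Re (b * cnj a)"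
  unfolding cmod_power2 by (simp add: power2_eq_square algebra_simps)

lemma lift:
  fixes \<alpha> :: "real \<Rightarrow> real" and w0 :: "nat \<Rightarrow> complex" and l :: "nat \<Rightarrow> real"
  assumes "finite I" "I \<noteq> {}" "\<forall>i\<in>I. l i > 0" "\<forall>i\<in>I. cmod (w0 i) = l i"
    "continuous_on {0..1} \<alpha>" "\<forall>t\<in>{0..1}. mlow l I \<le> \<alpha> t \<and> \<alpha> t \<le> Lsum l I"
    "\<alpha> 0 = cmod (\<Sum>i\<in>I. w0 i)"
  shows "\<exists>W. (\<forall>i\<in>I. continuous_on {0..1} (\<lambda>t. W t i)) \<and> (\<forall>t\<in>{0..1}. \<forall>i\<in>I. cmod (W t i) = l i)
     \<and> (\<forall>i\<in>I. W 0 i = w0 i) \<and> (\<forall>t\<in>{0..1}. cmod (\<Sum>i\<in>I. W t i) = \<alpha> t)"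
  using assms
proof (induction "card I" arbitrary: I w0 \<alpha> rule: less_induct)
  case less
  show ?case
  proof (cases "card I = 1")
    case True
    then obtain i where I: "I = {i}" using card_1_singletonE by blast
    have li: "l i > 0" using less.prems(3) I by auto
    have "\<forall>t\<in>{0..1}. \<alpha> t = l i" using less.prems(6) I li by (auto simp: mlow_def Lsum_def)
    then show ?thesis using less.prems(4) I
      by (intro exI[of _ "\<lambda>t. w0"]) auto
  next
    case False
    have c2: "card I \<ge> 2" using False less.prems(1,2) card_0_eq[of I] by linarith
    define V0 where "V0 = (\<Sum>i\<in>I. w0 i)"
    obtain i where i: "i \<in> I" "w0 i \<noteq> V0"
    proof (rule ccontr)
      assume "\<not> thesis"
      then have all: "\<forall>i\<in>I. w0 i = V0" using that by blast
      then have "(\<Sum>i\<in>I. w0 i) = (\<Sum>i\<in>I. V0)" by (intro sum.cong) auto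
      then have "V0 = of_nat (card I) * V0" by (simp add: V0_def[symmetric])
      then have "(of_nat (card I) - 1) * V0 = 0" by (simp add: algebra_simps)
      moreover have "(of_nat (card I) - 1 :: complex) \<noteq> 0"
      proof
        assume "(of_nat (card I) - 1 :: complex) = 0"
        then have "(of_nat (card I) :: complex) = 1" by simp
        then show False using c2 by simp
      qed
      ultimately have "V0 = 0" by simp
      obtain j where "j \<in> I" using less.prems(2) by blast
      then have "cmod (w0 j) = 0" using all \<open>V0 = 0\<close> by simp
      then show False using less.prems(3,4) \<open>j \<in> I\<close> by auto
    qed
    define J where "J = I - {i}"
    have finJ: "finite J" using less.prems(1) J_def by simp
    have cardJ: "card J < card I" "card J \<ge> 1" using i(1) less.prems(1) c2 J_def by (auto simp: card_Diff_singleton)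
    have Jne: "J \<noteq> {}" using cardJ(2) by auto
    have IJ: "I = insert i J" "i \<notin> J" using i(1) J_def by auto
    define li where "li = l i"
    have li: "li > 0" using less.prems(3) i(1) li_def by auto
    have sumI: "\<And>W. (\<Sum>j\<in>I. W j) = W i + (\<Sum>j\<in>J. W j)"
      using IJ finJ by simp
    define b0 where "b0 = cmod (\<Sum>j\<in>J. w0 j)"
    have b0pos: "b0 > 0" using i(2) sumI[of w0] unfolding b0_def V0_def by auto
    have bJ: "mlow l J \<le> b0 \<and> b0 \<le> Lsum l J"
      unfolding b0_def by (rule sum_bounds[OF finJ Jne]) (use less.prems(4) J_def in auto)
    define MJ where "MJ = Max (l ` J)"
    define LJ where "LJ = Lsum l J"
    have LI: "Lsum l I = li + LJ" unfolding LJ_def Lsum_def li_def using sumI[of l] .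
    have MI: "Max (l ` I) = max li MJ" unfolding MJ_def li_def using IJ finJ Jne by simp
    have MJLJ: "MJ \<le> LJ"
    proof -
      have "MJ \<in> l ` J" unfolding MJ_def using finJ Jne by simp
      then obtain j where j: "j \<in> J" "MJ = l j" by auto
      have "l j \<le> LJ" unfolding LJ_def Lsum_def
        by (rule member_le_sum) (use j less.prems(1,3) J_def in auto)
      then show ?thesis using j by simp
    qed
    have mJ: "mlow l J = max 0 (2 * MJ - LJ)" unfolding mlow_def MJ_def LJ_def ..
    have LJpos: "LJ > 0" unfolding LJ_def Lsum_def
      by (rule sum_pos[OF finJ Jne]) (use less.prems(3) J_def in auto)
    have al: "\<And>t. t \<in> {0..1} \<Longrightarrow> 0 \<le> \<alpha> t \<and> 2 * max li MJ - (li + LJ) \<le> \<alpha> t \<and> \<alpha> t \<le> li + LJ"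
      using less.prems(6) unfolding mlow_def MI LI by auto
    define lo where "lo t = max (mlow l J) \<bar>\<alpha> t - li\<bar>" for t
    define hi where "hi t = min LJ (\<alpha> t + li)" for t
    define b where "b t = max (lo t) (min (hi t) b0)" for t
    have lohi: "\<And>t. t \<in> {0..1} \<Longrightarrow> lo t \<le> hi t"
    proof -
      fix t :: real assume t: "t \<in> {0..1}"
      have a: "0 \<le> \<alpha> t \<and> 2 * max li MJ - (li + LJ) \<le> \<alpha> t \<and> \<alpha> t \<le> li + LJ"
        using al t by blast
      show "lo t \<le> hi t" unfolding lo_def hi_def mJ
        unfolding max.bounded_iff min.bounded_iff
        using a MJLJ li LJpos max.cobounded1[of li MJ] max.cobounded2[of MJ li] by (auto simp: abs_le_iff)
    qed
    have bprop: "\<And>t. t \<in> {0..1} \<Longrightarrow> mlow l J \<le> b t \<and> b t \<le> Lsum l J \<and> \<bar>\<alpha> t - li\<bar> \<le> b t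
        \<and> b t \<le> \<alpha> t + li \<and> b t > 0"
    proof -
      fix t :: real assume t: "t \<in> {0..1}"
      have "hi t > 0" unfolding hi_def using LJpos al[OF t] li by simp
      then show "mlow l J \<le> b t \<and> b t \<le> Lsum l J \<and> \<bar>\<alpha> t - li\<bar> \<le> b t \<and> b t \<le> \<alpha> t + li \<and> b t > 0"
        using lohi[OF t] b0pos unfolding b_def lo_def hi_def LJ_def by auto
    qed
    have bnz: "\<And>t. t \<in> {0..1} \<Longrightarrow> b t \<noteq> 0" using bprop by force
    have a0: "\<alpha> 0 = cmod (w0 i + (\<Sum>j\<in>J. w0 j))" using less.prems(7) sumI[of w0] by simp
    have w0i: "cmod (w0 i) = li" using less.prems(4) i(1) li_def by simp
    have tri1: "\<alpha> 0 \<le> li + b0" unfolding a0 b0_def w0i[symmetric] by (rule norm_triangle_ineq)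
    have tri2: "li \<le> \<alpha> 0 + b0"
    proof -
      have "cmod (w0 i) = cmod ((w0 i + (\<Sum>j\<in>J. w0 j)) - (\<Sum>j\<in>J. w0 j))" by simp
      also have "\<dots> \<le> cmod (w0 i + (\<Sum>j\<in>J. w0 j)) + cmod (\<Sum>j\<in>J. w0 j)" by (rule norm_triangle_ineq4)
      finally show ?thesis using a0 w0i b0_def by simp
    qed
    have tri3: "b0 \<le> \<alpha> 0 + li"
    proof -
      have "cmod (\<Sum>j\<in>J. w0 j) = cmod ((w0 i + (\<Sum>j\<in>J. w0 j)) - w0 i)" by simp
      also have "\<dots> \<le> cmod (w0 i + (\<Sum>j\<in>J. w0 j)) + cmod (w0 i)" by (rule norm_triangle_ineq4)
      finally show ?thesis using a0 w0i b0_def by simp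
    qed
    have b00: "b 0 = b0" unfolding b_def lo_def hi_def using bJ tri1 tri2 tri3 unfolding LJ_def by auto
    have bcont: "continuous_on {0..1} b" unfolding b_def lo_def hi_def
      by (intro continuous_intros less.prems(5))
    obtain W' where W': "\<forall>j\<in>J. continuous_on {0..1} (\<lambda>t. W' t j)" "\<forall>t\<in>{0..1}. \<forall>j\<in>J. cmod (W' t j) = l j"
       "\<forall>j\<in>J. W' 0 j = w0 j" "\<forall>t\<in>{0..1}. cmod (\<Sum>j\<in>J. W' t j) = b t"
      using less.hyps[OF cardJ(1) finJ Jne, of w0 b] less.prems(3,4) J_def bcont bprop b00 b0_def
      by auto
    define B where "B t = (\<Sum>j\<in>J. W' t j)" for t
    have B0: "B 0 = (\<Sum>j\<in>J. w0 j)" unfolding B_def using W'(3) by simp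
    have Bcont: "continuous_on {0..1} B" unfolding B_def using W'(1) by (intro continuous_intros) auto
    define c where "c t = ((\<alpha> t)^2 - (b t)^2 - li^2) / (2 * b t * li)" for t
    have crange: "\<And>t. t \<in> {0..1} \<Longrightarrow> -1 \<le> c t \<and> c t \<le> 1"
    proof -
      fix t :: real assume t: "t \<in> {0..1}"
      note bp = bprop[OF t] and a = al[OF t]
      have p: "2 * b t * li > 0" using bp li by simp
      have "(\<alpha> t)^2 - (b t)^2 - li^2 \<le> 2 * b t * li"
      proof -
        have "\<alpha> t \<le> b t + li" using bp by linarith
        then have "(\<alpha> t)^2 \<le> (b t + li)^2" using a by (intro power_mono) auto
        then show ?thesis by (simp add: power2_eq_square algebra_simps)
      qed
      moreover have "-(2 * b t * li) \<le> (\<alpha> t)^2 - (b t)^2 - li^2"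
      proof -
        have "\<bar>b t - li\<bar> \<le> \<alpha> t" using bp by linarith
        then have "(b t - li)^2 \<le> (\<alpha> t)^2" using a
          using abs_le_square_iff[of "b t - li" "\<alpha> t"] by simp
        then show ?thesis by (simp add: power2_eq_square algebra_simps)
      qed
      ultimately show "-1 \<le> c t \<and> c t \<le> 1" unfolding c_def using p
        by (simp add: divide_le_eq le_divide_eq)
    qed
    have ccont: "continuous_on {0..1} c" unfolding c_def
      using bnz li by (intro continuous_intros less.prems(5) bcont) auto
    define z where "z = w0 i * cnj (B 0) / of_real (li * b0)"
    have Bn0: "cmod (B 0) = b0" using B0 b0_def by simp
    have zn: "cmod z = 1" unfolding z_def using Bn0 w0i li b0pos
      by (simp add: norm_divide norm_mult)
    have Rez: "Re z = c 0"
    proof -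
      have "(\<alpha> 0)^2 = b0^2 + li^2 + 2 * Re (w0 i * cnj (B 0))"
        using norm_add_sq[of "B 0" "w0 i"] a0 B0 Bn0 w0i by (simp add: add.commute)
      then show ?thesis unfolding c_def z_def b00 using li b0pos
        by (simp add: field_simps)
    qed
    define \<sigma> where "\<sigma> = (if Im z \<ge> 0 then 1 else -1 :: real)"
    define u where "u t = B t / of_real (b t) * cis (\<sigma> * arccos (c t))" for t
    define W where "W t = (W' t)(i := of_real li * u t)" for t
    have unorm: "\<And>t. t \<in> {0..1} \<Longrightarrow> cmod (u t) = 1"
    proof -
      fix t :: real assume t: "t \<in> {0..1}"
      have "cmod (B t) = b t" using W'(4) t B_def by simp
      then show "cmod (u t) = 1" unfolding u_def using bprop[OF t] by (simp add: norm_divide norm_mult)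
    qed
    have u0: "of_real li * u 0 = w0 i"
    proof -
      have "cis (\<sigma> * arccos (c 0)) = z" using cis_recover[OF zn] unfolding \<sigma>_def Rez by simp
      then have "u 0 = B 0 / of_real b0 * z" unfolding u_def b00 by simp
      then have "of_real li * u 0 = w0 i * (B 0 * cnj (B 0)) / of_real (b0 * b0)" unfolding z_def
        using li b0pos by (simp add: field_simps)
      also have "B 0 * cnj (B 0) = of_real (b0 * b0)" using complex_norm_square[of "B 0"] Bn0
        by (simp add: power2_eq_square)
      finally show ?thesis using li b0pos by simp
    qed
    show ?thesis
    proof (intro exI[of _ W] conjI ballI)
      fix j assume j: "j \<in> I"
      show "continuous_on {0..1} (\<lambda>t. W t j)"
      proof (cases "j = i")
        case True
        have "continuous_on {0..1} u" unfolding u_def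
          using bnz crange by (intro continuous_intros Bcont bcont ccont) auto
        then show ?thesis unfolding W_def True by (auto intro: continuous_intros)
      next
        case False
        then show ?thesis unfolding W_def using W'(1) j J_def by simp
      qed
    next
      fix t :: real and j assume t: "t \<in> {0..1}" and j: "j \<in> I"
      show "cmod (W t j) = l j"
      proof (cases "j = i")
        case True
        then show ?thesis unfolding W_def using unorm[OF t] li li_def by (simp add: norm_mult)
      next
        case False
        then show ?thesis unfolding W_def using W'(2) t j J_def by simp
      qed
    next
      fix j assume j: "j \<in> I"
      show "W 0 j = w0 j"
      proof (cases "j = i")
        case True
        then show ?thesis unfolding W_def using u0 by simp
      next
        case False
        then show ?thesis unfolding W_def using W'(3) j J_def by simp
      qed
    next
      fix t :: real assume t: "t \<in> {0..1}"
      note bp = bprop[OF t]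
      have Bt: "cmod (B t) = b t" using W'(4) t B_def by simp
      have s: "(\<Sum>j\<in>I. W t j) = of_real li * u t + B t"
      proof -
        have "(\<Sum>j\<in>J. W t j) = B t" unfolding B_def W_def
          by (rule sum.cong) (use IJ(2) in auto)
        moreover have "W t i = of_real li * u t" unfolding W_def by simp
        ultimately show ?thesis using sumI[of "W t"] by simp
      qed
      also have "\<dots> = B t / of_real (b t) * (of_real (b t) + of_real li * cis (\<sigma> * arccos (c t)))"
        unfolding u_def using bp by (simp add: field_simps)
      finally have "cmod (\<Sum>j\<in>I. W t j) = cmod (of_real (b t) + of_real li * cis (\<sigma> * arccos (c t)))"
        using Bt bp by (simp add: norm_mult norm_divide)
      moreover have "(cmod (of_real (b t) + of_real li * cis (\<sigma> * arccos (c t))))^2 = (\<alpha> t)^2"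
      proof -
        have "cos (\<sigma> * arccos (c t)) = c t" unfolding \<sigma>_def using crange[OF t] by simp
        then show ?thesis unfolding norm_cis_sq c_def using bp li by (simp add: field_simps)
      qed
      ultimately show "cmod (\<Sum>j\<in>I. W t j) = \<alpha> t" using al[OF t]
        by (metis norm_ge_zero power2_eq_iff_nonneg)
    qed
  qed
qed


lemma theta_orbit: "theta k (conf_orbit k c) = cmod (c 1 - c (Suc k))"
proof -
  have idg: "(\<lambda>z. 1 * z + 0) \<in> orient_isometries" unfolding orient_isometries_def
    by (rule CollectI, rule exI[of _ 1], rule exI[of _ 0]) simp
  have ne: "\<exists>q. q \<in> conf_orbit k c" unfolding conf_orbit_def using idg by blast
  define q where "q = (SOME q. q \<in> conf_orbit k c)"
  have "q \<in> conf_orbit k c" unfolding q_def using someI_ex[OF ne] .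
  then obtain g where g: "g \<in> orient_isometries" "q = restrict (g \<circ> c) {1..Suc k}"
    unfolding conf_orbit_def by blast
  then obtain u b where ub: "cmod u = 1" "g = (\<lambda>z. u * z + b)" unfolding orient_isometries_def by blast
  have "q 1 - q (Suc k) = u * (c 1 - c (Suc k))" using g(2) ub(2) by (simp add: algebra_simps)
  then have "cmod (q 1 - q (Suc k)) = cmod (c 1 - c (Suc k))" using ub(1) by (simp add: norm_mult)
  then show ?thesis unfolding theta_def q_def[symmetric] by simp
qed

lemma cont_quot: "continuous_map X (quot_topology X f) f"
  unfolding continuous_map topspace_quot_topology openin_quot_topology by blast

lemma telesc: "(\<Sum>i\<in>{1..k}. c (Suc i) - c i) = c (Suc k) - (c 1 :: complex)"
proof -
  have "{1..k} = {1..<Suc k}" by auto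
  then show ?thesis using sum_Suc_diff'[of 1 "Suc k" c] by simp
qed

theorem mainTheorem9:
  fixes k :: nat and l :: "nat \<Rightarrow> real" and p :: "(nat \<Rightarrow> complex) set"
    and \<alpha> :: "real \<Rightarrow> real"
  assumes "k \<ge> 2"
    and "\<forall>i\<in>{1..k}. l i > 0"
    and "p \<in> moduli k l"
    and "continuous_on {0..1} \<alpha>"
    and "\<alpha> ` {0..1} \<subseteq> theta k ` moduli k l"
    and "\<alpha> 0 = theta k p"
  shows "\<exists>\<beta>. continuous_map (top_of_set {0..1}) (moduli_top k l) \<beta> \<and> \<beta> 0 = p \<and>
           (\<forall>t\<in>{0..1}. theta k (\<beta> t) = \<alpha> t)"
proof -
  obtain q where q: "q \<in> path_conf k l" "p = conf_orbit k q" using assms(3) unfolding moduli_def by blast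
  define I where "I = {1..k}"
  have finI: "finite I" and Ine: "I \<noteq> {}" unfolding I_def using assms(1) by auto
  have thconf: "\<And>q'. q' \<in> path_conf k l \<Longrightarrow> theta k (conf_orbit k q') = cmod (\<Sum>i\<in>I. q' (Suc i) - q' i)
      \<and> (\<forall>i\<in>I. cmod (q' (Suc i) - q' i) = l i)"
  proof -
    fix q' assume q': "q' \<in> path_conf k l"
    have "theta k (conf_orbit k q') = cmod (q' (Suc k) - q' 1)"
      unfolding theta_orbit by (simp add: norm_minus_commute)
    then show "theta k (conf_orbit k q') = cmod (\<Sum>i\<in>I. q' (Suc i) - q' i) \<and> (\<forall>i\<in>I. cmod (q' (Suc i) - q' i) = l i)"
      using q' unfolding I_def telesc path_conf_def by auto
  qed
  define w0 where "w0 i = q (Suc i) - q i" for i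
  have w0n: "\<forall>i\<in>I. cmod (w0 i) = l i" using thconf[OF q(1)] unfolding w0_def by simp
  have abnd: "\<forall>t\<in>{0..1}. mlow l I \<le> \<alpha> t \<and> \<alpha> t \<le> Lsum l I"
  proof
    fix t :: real assume t: "t \<in> {0..1}"
    then have "\<alpha> t \<in> theta k ` moduli k l" using assms(5) by blast
    then obtain q' where q': "q' \<in> path_conf k l" "\<alpha> t = theta k (conf_orbit k q')"
      unfolding moduli_def by blast
    show "mlow l I \<le> \<alpha> t \<and> \<alpha> t \<le> Lsum l I"
      using thconf[OF q'(1)] q'(2) sum_bounds[OF finI Ine, of "\<lambda>i. q' (Suc i) - q' i" l] by simp
  qed
  have a0: "\<alpha> 0 = cmod (\<Sum>i\<in>I. w0 i)" using assms(6) thconf[OF q(1)] q(2) unfolding w0_def by simp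
  obtain W where W: "\<forall>i\<in>I. continuous_on {0..1} (\<lambda>t. W t i)" "\<forall>t\<in>{0..1}. \<forall>i\<in>I. cmod (W t i) = l i"
     "\<forall>i\<in>I. W 0 i = w0 i" "\<forall>t\<in>{0..1}. cmod (\<Sum>i\<in>I. W t i) = \<alpha> t"
    using lift[OF finI Ine _ w0n assms(4) abnd a0] assms(2) unfolding I_def by blast
  define \<gamma> where "\<gamma> t = restrict (\<lambda>j. q 1 + (\<Sum>i\<in>{1..<j}. W t i)) {1..Suc k}" for t
  have edge: "\<And>t i. i \<in> I \<Longrightarrow> \<gamma> t (Suc i) - \<gamma> t i = W t i"
  proof -
    fix t i assume i: "i \<in> I"
    then have "1 \<le> i" "i \<le> k" unfolding I_def by auto
    then show "\<gamma> t (Suc i) - \<gamma> t i = W t i" unfolding \<gamma>_def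
      by (simp add: sum.atLeastLessThan_Suc)
  qed
  have gconf: "\<And>t. t \<in> {0..1} \<Longrightarrow> \<gamma> t \<in> path_conf k l"
  proof -
    fix t :: real assume t: "t \<in> {0..1}"
    have "\<forall>i\<in>{1..k}. cmod (\<gamma> t (Suc i) - \<gamma> t i) = l i" using edge W(2) t unfolding I_def by simp
    then show "\<gamma> t \<in> path_conf k l" unfolding path_conf_def \<gamma>_def by simp
  qed
  have g0: "\<gamma> 0 = q"
  proof
    fix j
    show "\<gamma> 0 j = q j"
    proof (cases "j \<in> {1..Suc k}")
      case True
      then have "(\<Sum>i\<in>{1..<j}. W 0 i) = (\<Sum>i\<in>{1..<j}. q (Suc i) - q i)"
        using W(3) unfolding I_def w0_def by (intro sum.cong) auto
      also have "\<dots> = q j - q 1" using True by (intro sum_Suc_diff') auto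
      finally show ?thesis unfolding \<gamma>_def using True by simp
    next
      case False
      then show ?thesis using q(1) unfolding \<gamma>_def path_conf_def by (auto simp: PiE_def extensional_def)
    qed
  qed
  have gcont: "continuous_map (top_of_set {0..1}) (path_conf_top k l) \<gamma>"
    unfolding path_conf_top_def continuous_map_in_subtopology
  proof
    show "\<gamma> \<in> topspace (top_of_set {0..1}) \<rightarrow> path_conf k l" using gconf by auto
    show "continuous_map (top_of_set {0..1}) (product_topology (\<lambda>_. euclidean) {1..Suc k}) \<gamma>"
      unfolding continuous_map_componentwise
    proof
      show "\<gamma> ` topspace (top_of_set {0..1}) \<subseteq> extensional {1..Suc k}" unfolding \<gamma>_def by auto
      show "\<forall>j\<in>{1..Suc k}. continuous_map (top_of_set {0..1}) euclidean (\<lambda>x. \<gamma> x j)"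
      proof
        fix j assume j: "j \<in> {1..Suc k}"
        have "continuous_on {0..1} (\<lambda>t. q 1 + (\<Sum>i\<in>{1..<j}. W t i))"
          using W(1) j unfolding I_def by (intro continuous_intros) auto
        then show "continuous_map (top_of_set {0..1}) euclidean (\<lambda>x. \<gamma> x j)"
          unfolding \<gamma>_def using j by simp
      qed
    qed
  qed
  show ?thesis
  proof (intro exI[of _ "conf_orbit k \<circ> \<gamma>"] conjI ballI)
    show "continuous_map (top_of_set {0..1}) (moduli_top k l) (conf_orbit k \<circ> \<gamma>)"
      unfolding moduli_top_def by (rule continuous_map_compose[OF gcont cont_quot])
    show "(conf_orbit k \<circ> \<gamma>) 0 = p" using g0 q(2) by simp
    fix t :: real assume t: "t \<in> {0..1}"
    have "theta k ((conf_orbit k \<circ> \<gamma>) t) = cmod (\<Sum>i\<in>I. \<gamma> t (Suc i) - \<gamma> t i)"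
      using thconf[OF gconf[OF t]] by simp
    also have "\<dots> = cmod (\<Sum>i\<in>I. W t i)" using edge by (simp cong: sum.cong)
    finally show "theta k ((conf_orbit k \<circ> \<gamma>) t) = \<alpha> t" using W(4) t by simp
  qed
qed

end
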